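(* Fix $a>0$, $b>0$, $c>0$, $\theta>0$ such that $\zeta:=\frac{b^2-a(c-\theta)}{a^2}<0$, and let $\kappa=b/a$, $s=\sqrt{-\zeta}$, $z=\frac{c-\theta}{b}$, $p=\frac{b^2}{a(c-\theta)}$. If $a\le\frac{2b^2}{c-\theta}$, the distribution assigning probability $\tfrac12$ to each of $\kappa-s$ and $\kappa+s$ is a distribution on $[0,\infty)$; if $a\ge\frac{2b^2}{c-\theta}$, then $p\in(0,1)$ and the distribution assigning probability $1-p$ to $0$ and probability $p$ to $z$ is a distribution on $[0,\infty)$. In each case the distribution has mean $\kappa$ and variance $-\zeta$, and the profile in which both players use it is a mixed Nash equilibrium of the unrestricted contest (efforts $x,y\ge0$, payoffs $P(x,y)-\theta x$ and $1-P(x,y)-\theta y$ with $P(x,y)=\tfrac12+(x-y)(c-b(x+y)+axy)$, no truncation). At $a=\frac{2b^2}{c-\theta}$ the two distributions coincide. *)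

theory Defs
  imports "HOL-Probability.Probability"
begin

definition contestP :: "real \<Rightarrow> real \<Rightarrow> real \<Rightarrow> real \<Rightarrow> real \<Rightarrow> real" where
  "contestP a b c x y = 1/2 + (x - y) * (c - b * (x + y) + a * x * y)"

definition payoff1 :: "real \<Rightarrow> real \<Rightarrow> real \<Rightarrow> real \<Rightarrow> real \<times> real \<Rightarrow> real" where
  "payoff1 a b c \<theta> xy = contestP a b c (fst xy) (snd xy) - \<theta> * fst xy"

definition payoff2 :: "real \<Rightarrow> real \<Rightarrow> real \<Rightarrow> real \<Rightarrow> real \<times> real \<Rightarrow> real" where
  "payoff2 a b c \<theta> xy = 1 - contestP a b c (fst xy) (snd xy) - \<theta> * snd xy"

definition mixed_strategy :: "real measure \<Rightarrow> bool" where
  "mixed_strategy M \<longleftrightarrow> prob_space M \<and> sets M = sets borel \<and> (AE x in M. 0 \<le> x)"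

definition mixed_NE :: "real \<Rightarrow> real \<Rightarrow> real \<Rightarrow> real \<Rightarrow> real measure \<Rightarrow> real measure \<Rightarrow> bool" where
  "mixed_NE a b c \<theta> M N \<longleftrightarrow>
     mixed_strategy M \<and> mixed_strategy N \<and>
     integrable (M \<Otimes>\<^sub>M N) (payoff1 a b c \<theta>) \<and>
     integrable (M \<Otimes>\<^sub>M N) (payoff2 a b c \<theta>) \<and>
     (\<forall>M'. mixed_strategy M' \<and> integrable (M' \<Otimes>\<^sub>M N) (payoff1 a b c \<theta>) \<longrightarrow>
        integral\<^sup>L (M' \<Otimes>\<^sub>M N) (payoff1 a b c \<theta>) \<le> integral\<^sup>L (M \<Otimes>\<^sub>M N) (payoff1 a b c \<theta>)) \<and>
     (\<forall>N'. mixed_strategy N' \<and> integrable (M \<Otimes>\<^sub>M N') (payoff2 a b c \<theta>) \<longrightarrow>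
        integral\<^sup>L (M \<Otimes>\<^sub>M N') (payoff2 a b c \<theta>) \<le> integral\<^sup>L (M \<Otimes>\<^sub>M N) (payoff2 a b c \<theta>))"

definition pmf_borel :: "real pmf \<Rightarrow> real measure" where
  "pmf_borel D = distr (measure_pmf D) borel (\<lambda>x. x)"

definition two_point_half :: "real \<Rightarrow> real \<Rightarrow> real pmf" where
  "two_point_half u v = map_pmf (\<lambda>t. if t then v else u) (bernoulli_pmf (1/2))"

definition zero_or :: "real \<Rightarrow> real \<Rightarrow> real pmf" where
  "zero_or p z = map_pmf (\<lambda>t. if t then z else 0) (bernoulli_pmf p)"

end

theory Submission imports Defs begin

definition DD :: "real \<Rightarrow> real \<Rightarrow> real \<Rightarrow> real pmf" where
  "DD q u v = map_pmf (\<lambda>t. if t then v else u) (bernoulli_pmf q)"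

lemma int_D:
  fixes g :: "real \<Rightarrow> real"
  assumes "0 \<le> q" "q \<le> 1" "g \<in> borel_measurable borel"
  shows "integral\<^sup>L (pmf_borel (DD q u v)) g = q * g v + (1 - q) * g u"
  unfolding pmf_borel_def DD_def using assms
  by (subst integral_distr) (auto simp: algebra_simps)

lemma integrable_D:
  fixes g :: "real \<Rightarrow> real"
  assumes "g \<in> borel_measurable borel"
  shows "integrable (pmf_borel (DD q u v)) g"
  unfolding pmf_borel_def using assms
  by (subst integrable_distr_eq[where N=borel]) (auto intro!: integrable_measure_pmf_finite simp: DD_def)

lemma ms_D: assumes "0 \<le> u" "0 \<le> v" shows "mixed_strategy (pmf_borel (DD q u v))"
  unfolding mixed_strategy_def pmf_borel_def
proof (intro conjI)
  show "prob_space (distr (measure_pmf (DD q u v)) borel (\<lambda>x. x))"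
    by (rule prob_space.prob_space_distr) (auto simp: measure_pmf.prob_space_axioms)
  show "sets (distr (measure_pmf (DD q u v)) borel (\<lambda>x. x)) = sets borel" by simp
  show "AE x in distr (measure_pmf (DD q u v)) borel (\<lambda>x. x). 0 \<le> x"
    using assms by (subst AE_distr_iff) (auto intro!: AE_pmfI simp: DD_def)
qed

lemma meas_pay:
  assumes "sets M = sets borel" "sets N = sets borel"
  shows "payoff1 a b c \<theta> \<in> borel_measurable (M \<Otimes>\<^sub>M N)"
    "payoff2 a b c \<theta> \<in> borel_measurable (M \<Otimes>\<^sub>M N)"
proof -
  have e: "sets (M \<Otimes>\<^sub>M N) = sets (borel \<Otimes>\<^sub>M borel)"
    by (rule sets_pair_measure_cong[OF assms])
  have "payoff1 a b c \<theta> \<in> borel_measurable (borel \<Otimes>\<^sub>M borel)"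
    "payoff2 a b c \<theta> \<in> borel_measurable (borel \<Otimes>\<^sub>M borel)"
    unfolding payoff1_def payoff2_def contestP_def by measurable
  then show "payoff1 a b c \<theta> \<in> borel_measurable (M \<Otimes>\<^sub>M N)"
    "payoff2 a b c \<theta> \<in> borel_measurable (M \<Otimes>\<^sub>M N)"
    using measurable_cong_sets[OF e refl] by auto
qed

lemma inner1:
  assumes "0 \<le> q" "q \<le> 1" "a > 0"
    and m1: "q * v + (1 - q) * u = b / a" and m2: "q * v^2 + (1 - q) * u^2 = (c - \<theta>) / a"
  shows "integral\<^sup>L (pmf_borel (DD q u v)) (\<lambda>y. payoff1 a b c \<theta> (x, y)) = 1/2 - c * (b/a) + b * ((c - \<theta>) / a)"
    and "integral\<^sup>L (pmf_borel (DD q u v)) (\<lambda>y. payoff2 a b c \<theta> (y, x)) = 1/2 - c * (b/a) + b * ((c - \<theta>) / a)"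
proof -
  have "integral\<^sup>L (pmf_borel (DD q u v)) (\<lambda>y. payoff1 a b c \<theta> (x, y)) =
     q * payoff1 a b c \<theta> (x, v) + (1 - q) * payoff1 a b c \<theta> (x, u)"
    using assms by (intro int_D) (auto simp: payoff1_def contestP_def)
  also have "\<dots> = 1/2 + c*x - c * (q * v + (1 - q) * u) - b*x^2 + b * (q * v^2 + (1 - q) * u^2)
      + a*x^2 * (q * v + (1 - q) * u) - a * x * (q * v^2 + (1 - q) * u^2) - \<theta> * x"
    by (simp add: payoff1_def contestP_def power2_eq_square field_simps)
  also have "\<dots> = 1/2 - c * (b/a) + b * ((c - \<theta>) / a)"
    unfolding m1 m2 using \<open>a > 0\<close> by (simp add: field_simps power2_eq_square)
  finally show "integral\<^sup>L (pmf_borel (DD q u v)) (\<lambda>y. payoff1 a b c \<theta> (x, y)) = 1/2 - c * (b/a) + b * ((c - \<theta>) / a)" .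
  have "integral\<^sup>L (pmf_borel (DD q u v)) (\<lambda>y. payoff2 a b c \<theta> (y, x)) =
     q * payoff2 a b c \<theta> (v, x) + (1 - q) * payoff2 a b c \<theta> (u, x)"
    using assms by (intro int_D) (auto simp: payoff2_def contestP_def)
  also have "\<dots> = 1/2 + c*x - c * (q * v + (1 - q) * u) - b*x^2 + b * (q * v^2 + (1 - q) * u^2)
      + a*x^2 * (q * v + (1 - q) * u) - a * x * (q * v^2 + (1 - q) * u^2) - \<theta> * x"
    by (simp add: payoff2_def contestP_def power2_eq_square field_simps)
  also have "\<dots> = 1/2 - c * (b/a) + b * ((c - \<theta>) / a)"
    unfolding m1 m2 using \<open>a > 0\<close> by (simp add: field_simps power2_eq_square)
  finally show "integral\<^sup>L (pmf_borel (DD q u v)) (\<lambda>y. payoff2 a b c \<theta> (y, x)) = 1/2 - c * (b/a) + b * ((c - \<theta>) / a)" .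
qed

lemma gen_NE:
  assumes "0 \<le> q" "q \<le> 1" "a > 0" "0 \<le> u" "0 \<le> v"
    and m1: "q * v + (1 - q) * u = b / a" and m2: "q * v^2 + (1 - q) * u^2 = (c - \<theta>) / a"
  shows "mixed_NE a b c \<theta> (pmf_borel (DD q u v)) (pmf_borel (DD q u v))"
proof -
  define N where "N = pmf_borel (DD q u v)"
  define K where "K = 1/2 - c * (b/a) + b * ((c - \<theta>) / a)"
  have msN: "mixed_strategy N" unfolding N_def using assms by (intro ms_D)
  then interpret N: prob_space N by (simp add: mixed_strategy_def)
  have sN: "sets N = sets borel" using msN by (simp add: mixed_strategy_def)
  have in1: "integral\<^sup>L N (\<lambda>y. payoff1 a b c \<theta> (x, y)) = K" for x
    unfolding N_def K_def by (rule inner1(1)[OF assms(1-3) m1 m2])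
  have in2: "integral\<^sup>L N (\<lambda>y. payoff2 a b c \<theta> (y, x)) = K" for x
    unfolding N_def K_def by (rule inner1(2)[OF assms(1-3) m1 m2])
  have G1: "integral\<^sup>L (M' \<Otimes>\<^sub>M N) (payoff1 a b c \<theta>) = K"
    if "mixed_strategy M'" "integrable (M' \<Otimes>\<^sub>M N) (payoff1 a b c \<theta>)" for M'
  proof -
    interpret M': prob_space M' using that by (simp add: mixed_strategy_def)
    interpret P: pair_prob_space M' N ..
    have "integral\<^sup>L (M' \<Otimes>\<^sub>M N) (payoff1 a b c \<theta>) = (\<integral>x. (\<integral>y. payoff1 a b c \<theta> (x, y) \<partial>N) \<partial>M')"
      using P.integral_fst'[OF that(2)] by simp
    also have "\<dots> = K" by (simp add: in1 M'.prob_space)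
    finally show ?thesis .
  qed
  have G2: "integral\<^sup>L (N \<Otimes>\<^sub>M M') (payoff2 a b c \<theta>) = K"
    if "mixed_strategy M'" "integrable (N \<Otimes>\<^sub>M M') (payoff2 a b c \<theta>)" for M'
  proof -
    interpret M': prob_space M' using that by (simp add: mixed_strategy_def)
    interpret P: pair_prob_space N M' ..
    have i: "integrable (N \<Otimes>\<^sub>M M') (case_prod (\<lambda>x y. payoff2 a b c \<theta> (x, y)))"
      using that(2) by simp
    have "integral\<^sup>L (N \<Otimes>\<^sub>M M') (payoff2 a b c \<theta>) = (\<integral>y. (\<integral>x. payoff2 a b c \<theta> (x, y) \<partial>N) \<partial>M')"
      using P.integral_snd[OF i] by simp
    also have "\<dots> = K" by (simp add: in2 M'.prob_space)
    finally show ?thesis .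
  qed
  interpret NN: pair_prob_space N N ..
  have mp: "payoff1 a b c \<theta> \<in> borel_measurable (N \<Otimes>\<^sub>M N)"
    "payoff2 a b c \<theta> \<in> borel_measurable (N \<Otimes>\<^sub>M N)"
    using meas_pay[OF sN sN] by auto
  have intN: "integrable N g" if "g \<in> borel_measurable borel" for g :: "real \<Rightarrow> real"
    unfolding N_def by (rule integrable_D[OF that])
  have mb: "g \<in> borel_measurable N" if "g \<in> borel_measurable borel" for g :: "real \<Rightarrow> real"
    using that measurable_cong_sets[OF sN refl] by auto
  have sNb: "measurable N borel = measurable borel borel" by (rule measurable_cong_sets[OF sN refl])
  have I1: "integrable (N \<Otimes>\<^sub>M N) (payoff1 a b c \<theta>)"
  proof (rule NN.Fubini_integrable[OF mp(1)])
    have e: "case_prod (\<lambda>x y. norm (payoff1 a b c \<theta> (x, y))) = (\<lambda>z. norm (payoff1 a b c \<theta> z))" by auto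
    have "(\<lambda>z. norm (payoff1 a b c \<theta> z)) \<in> borel_measurable (N \<Otimes>\<^sub>M N)"
      using mp(1) by measurable
    then have "(\<lambda>x. \<integral>y. norm (payoff1 a b c \<theta> (x, y)) \<partial>N) \<in> borel_measurable N"
      by (intro N.borel_measurable_lebesgue_integral) (simp only: e)
    then show "integrable N (\<lambda>x. \<integral>y. norm (payoff1 a b c \<theta> (x, y)) \<partial>N)"
      unfolding sNb by (rule intN)
    show "AE x in N. integrable N (\<lambda>y. payoff1 a b c \<theta> (x, y))"
      by (intro AE_I2 intN) (unfold payoff1_def contestP_def, measurable)
  qed
  have I2: "integrable (N \<Otimes>\<^sub>M N) (payoff2 a b c \<theta>)"
  proof (rule NN.Fubini_integrable[OF mp(2)])
    have e: "case_prod (\<lambda>x y. norm (payoff2 a b c \<theta> (x, y))) = (\<lambda>z. norm (payoff2 a b c \<theta> z))" by auto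
    have "(\<lambda>z. norm (payoff2 a b c \<theta> z)) \<in> borel_measurable (N \<Otimes>\<^sub>M N)"
      using mp(2) by measurable
    then have "(\<lambda>x. \<integral>y. norm (payoff2 a b c \<theta> (x, y)) \<partial>N) \<in> borel_measurable N"
      by (intro N.borel_measurable_lebesgue_integral) (simp only: e)
    then show "integrable N (\<lambda>x. \<integral>y. norm (payoff2 a b c \<theta> (x, y)) \<partial>N)"
      unfolding sNb by (rule intN)
    show "AE x in N. integrable N (\<lambda>y. payoff2 a b c \<theta> (x, y))"
      by (intro AE_I2 intN) (unfold payoff2_def contestP_def, measurable)
  qed
  show ?thesis
    unfolding mixed_NE_def N_def[symmetric]
  proof (intro conjI allI impI)
    fix M' assume "mixed_strategy M' \<and> integrable (M' \<Otimes>\<^sub>M N) (payoff1 a b c \<theta>)"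
    then show "integral\<^sup>L (M' \<Otimes>\<^sub>M N) (payoff1 a b c \<theta>) \<le> integral\<^sup>L (N \<Otimes>\<^sub>M N) (payoff1 a b c \<theta>)"
      using G1[OF msN I1] G1 by simp
  next
    fix M' assume "mixed_strategy M' \<and> integrable (N \<Otimes>\<^sub>M M') (payoff2 a b c \<theta>)"
    then show "integral\<^sup>L (N \<Otimes>\<^sub>M M') (payoff2 a b c \<theta>) \<le> integral\<^sup>L (N \<Otimes>\<^sub>M N) (payoff2 a b c \<theta>)"
      using G2[OF msN I2] G2 by simp
  qed (use msN I1 I2 in auto)
qed

theorem proposition2:
  fixes a b c \<theta> :: real
  assumes "a > 0" "b > 0" "c > 0" "\<theta> > 0"
    and "(b^2 - a * (c - \<theta>)) / a^2 < 0"
  defines "\<zeta> \<equiv> (b^2 - a * (c - \<theta>)) / a^2"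
    and "\<kappa> \<equiv> b / a"
    and "s \<equiv> sqrt (- ((b^2 - a * (c - \<theta>)) / a^2))"
    and "z \<equiv> (c - \<theta>) / b"
    and "p \<equiv> b^2 / (a * (c - \<theta>))"
  shows
    "(a \<le> 2 * b^2 / (c - \<theta>) \<longrightarrow>
        set_pmf (two_point_half (\<kappa> - s) (\<kappa> + s)) \<subseteq> {0..} \<and>
        measure_pmf.expectation (two_point_half (\<kappa> - s) (\<kappa> + s)) (\<lambda>x. x) = \<kappa> \<and>
        measure_pmf.variance (two_point_half (\<kappa> - s) (\<kappa> + s)) (\<lambda>x. x) = - \<zeta> \<and>
        mixed_NE a b c \<theta> (pmf_borel (two_point_half (\<kappa> - s) (\<kappa> + s)))
                         (pmf_borel (two_point_half (\<kappa> - s) (\<kappa> + s))))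
   \<and> (a \<ge> 2 * b^2 / (c - \<theta>) \<longrightarrow>
        0 < p \<and> p < 1 \<and>
        set_pmf (zero_or p z) \<subseteq> {0..} \<and>
        measure_pmf.expectation (zero_or p z) (\<lambda>x. x) = \<kappa> \<and>
        measure_pmf.variance (zero_or p z) (\<lambda>x. x) = - \<zeta> \<and>
        mixed_NE a b c \<theta> (pmf_borel (zero_or p z)) (pmf_borel (zero_or p z)))
   \<and> (a = 2 * b^2 / (c - \<theta>) \<longrightarrow> two_point_half (\<kappa> - s) (\<kappa> + s) = zero_or p z)"
proof -
  define C where "C = c - \<theta>"
  have a2: "a^2 > 0" using assms(1) by simp
  have "b^2 - a * C < 0" using assms(5) a2 unfolding C_def by (simp add: divide_less_0_iff)
  then have aC: "a * C > b^2" by simp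
  have b2: "b^2 > 0" using assms(2) by simp
  have C0: "C > 0" using aC b2 assms(1) by (metis less_trans zero_less_mult_pos)
  have Cth: "c - \<theta> = C" by (simp add: C_def)
  have s2': "s^2 = -((b^2 - a * (c - \<theta>)) / a^2)" unfolding s_def using assms(5) by simp
  have s2: "s^2 = (a * C - b^2) / a^2" unfolding s2' Cth by (simp add: minus_divide_left)
  have s0: "s \<ge> 0" unfolding s_def using assms(5) by simp
  have mz: "- \<zeta> = (a * C - b^2) / a^2" unfolding \<zeta>_def Cth by (simp add: minus_divide_left)
  have k0: "\<kappa> > 0" unfolding \<kappa>_def using assms(1,2) by simp
  have E: "measure_pmf.expectation (DD q u v) (\<lambda>x. x) = q * v + (1 - q) * u"
    if "0 \<le> q" "q \<le> 1" for q u v using that by (simp add: DD_def algebra_simps)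
  have V: "measure_pmf.variance (DD q u v) (\<lambda>x. x) = q * (v - (q * v + (1 - q) * u))^2 + (1 - q) * (u - (q * v + (1 - q) * u))^2"
    if "0 \<le> q" "q \<le> 1" for q u v using that by (simp add: E DD_def algebra_simps)
  have T: "two_point_half u v = DD (1/2) u v" for u v by (simp add: two_point_half_def DD_def)
  have Z: "zero_or q w = DD q 0 w" for q w by (simp add: zero_or_def DD_def)
  have P1: "a \<le> 2 * b^2 / (c - \<theta>) \<longrightarrow>
        set_pmf (two_point_half (\<kappa> - s) (\<kappa> + s)) \<subseteq> {0..} \<and>
        measure_pmf.expectation (two_point_half (\<kappa> - s) (\<kappa> + s)) (\<lambda>x. x) = \<kappa> \<and>
        measure_pmf.variance (two_point_half (\<kappa> - s) (\<kappa> + s)) (\<lambda>x. x) = - \<zeta> \<and>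
        mixed_NE a b c \<theta> (pmf_borel (two_point_half (\<kappa> - s) (\<kappa> + s)))
                         (pmf_borel (two_point_half (\<kappa> - s) (\<kappa> + s)))"
  proof
    assume "a \<le> 2 * b^2 / (c - \<theta>)"
    then have "a * C \<le> 2 * b^2" using C0 unfolding Cth by (simp add: field_simps)
    then have "(a * C - b^2) / a^2 \<le> b^2 / a^2" using a2 by (intro divide_right_mono) auto
    then have "s^2 \<le> \<kappa>^2" unfolding s2 \<kappa>_def by (simp add: power_divide)
    then have sk: "s \<le> \<kappa>" using k0 power2_le_imp_le[of s \<kappa>] by simp
    have m1: "1/2 * (\<kappa> + s) + (1 - 1/2) * (\<kappa> - s) = b / a" unfolding \<kappa>_def by (simp add: field_simps)
    have "1/2 * (\<kappa> + s)^2 + (1 - 1/2) * (\<kappa> - s)^2 = \<kappa>^2 + s^2" by (simp add: power2_eq_square algebra_simps)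
    also have "\<dots> = (a * C) / a^2" unfolding s2 \<kappa>_def
      by (simp add: power_divide add_divide_distrib[symmetric])
    also have "\<dots> = (c - \<theta>) / a" unfolding Cth using assms(1) by (simp add: power2_eq_square)
    finally have m2: "1/2 * (\<kappa> + s)^2 + (1 - 1/2) * (\<kappa> - s)^2 = (c - \<theta>) / a" .
    have NE: "mixed_NE a b c \<theta> (pmf_borel (DD (1/2) (\<kappa> - s) (\<kappa> + s))) (pmf_borel (DD (1/2) (\<kappa> - s) (\<kappa> + s)))"
      by (rule gen_NE[OF _ _ assms(1) _ _ m1 m2]) (use sk s0 k0 in auto)
    have "set_pmf (two_point_half (\<kappa> - s) (\<kappa> + s)) \<subseteq> {0..}"
      using sk s0 by (auto simp: two_point_half_def)
    moreover have "measure_pmf.expectation (two_point_half (\<kappa> - s) (\<kappa> + s)) (\<lambda>x. x) = \<kappa>"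
      unfolding T by (subst E) (auto simp: field_simps)
    moreover have "measure_pmf.variance (two_point_half (\<kappa> - s) (\<kappa> + s)) (\<lambda>x. x) = - \<zeta>"
    proof -
      have mean: "1/2 * (\<kappa> + s) + (1 - 1/2) * (\<kappa> - s) = \<kappa>" by (simp add: field_simps)
      have "measure_pmf.variance (DD (1/2) (\<kappa> - s) (\<kappa> + s)) (\<lambda>x. x) =
        1/2 * ((\<kappa> + s) - (1/2 * (\<kappa> + s) + (1 - 1/2) * (\<kappa> - s)))^2
        + (1 - 1/2) * ((\<kappa> - s) - (1/2 * (\<kappa> + s) + (1 - 1/2) * (\<kappa> - s)))^2"
        by (rule V) auto
      also have "\<dots> = s^2" unfolding mean by (simp add: power2_eq_square)
      finally show ?thesis unfolding T s2 mz .
    qed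
    ultimately show "set_pmf (two_point_half (\<kappa> - s) (\<kappa> + s)) \<subseteq> {0..} \<and>
        measure_pmf.expectation (two_point_half (\<kappa> - s) (\<kappa> + s)) (\<lambda>x. x) = \<kappa> \<and>
        measure_pmf.variance (two_point_half (\<kappa> - s) (\<kappa> + s)) (\<lambda>x. x) = - \<zeta> \<and>
        mixed_NE a b c \<theta> (pmf_borel (two_point_half (\<kappa> - s) (\<kappa> + s)))
                         (pmf_borel (two_point_half (\<kappa> - s) (\<kappa> + s)))"
      using NE unfolding T by simp
  qed
  have p0: "0 < p" unfolding p_def Cth using b2 assms(1) C0 by simp
  have aCp: "a * C > 0" using aC b2 by linarith
  have p1: "p < 1" unfolding p_def Cth using aC aCp by (simp add: divide_less_eq)
  have z0: "z > 0" unfolding z_def Cth using C0 assms(2) by simp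
  have P2: "a \<ge> 2 * b^2 / (c - \<theta>) \<longrightarrow>
        0 < p \<and> p < 1 \<and>
        set_pmf (zero_or p z) \<subseteq> {0..} \<and>
        measure_pmf.expectation (zero_or p z) (\<lambda>x. x) = \<kappa> \<and>
        measure_pmf.variance (zero_or p z) (\<lambda>x. x) = - \<zeta> \<and>
        mixed_NE a b c \<theta> (pmf_borel (zero_or p z)) (pmf_borel (zero_or p z))"
  proof
    have m1: "p * z + (1 - p) * 0 = b / a" unfolding p_def z_def Cth using C0 assms(1,2)
      by (simp add: field_simps power2_eq_square)
    have m2: "p * z^2 + (1 - p) * 0^2 = (c - \<theta>) / a" unfolding p_def z_def Cth using C0 assms(1,2)
      by (simp add: field_simps power2_eq_square)
    have NE: "mixed_NE a b c \<theta> (pmf_borel (DD p 0 z)) (pmf_borel (DD p 0 z))"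
      by (rule gen_NE[OF _ _ assms(1) _ _ m1 m2]) (use p0 p1 z0 in auto)
    have "set_pmf (zero_or p z) \<subseteq> {0..}" using z0 by (auto simp: zero_or_def)
    moreover have "measure_pmf.expectation (zero_or p z) (\<lambda>x. x) = \<kappa>"
      unfolding Z using m1 p0 p1 unfolding \<kappa>_def by (subst E) auto
    moreover have "measure_pmf.variance (zero_or p z) (\<lambda>x. x) = - \<zeta>"
    proof -
      have "measure_pmf.variance (zero_or p z) (\<lambda>x. x) = p * z^2 - (p * z)^2"
        unfolding Z using p0 p1 by (subst V) (auto simp: power2_eq_square algebra_simps)
      also have "\<dots> = (c - \<theta>) / a - (b / a)^2" using m1 m2 by simp
      also have "\<dots> = - \<zeta>" unfolding mz Cth using assms(1) by (simp add: field_simps power2_eq_square)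
      finally show ?thesis .
    qed
    ultimately show "0 < p \<and> p < 1 \<and>
        set_pmf (zero_or p z) \<subseteq> {0..} \<and>
        measure_pmf.expectation (zero_or p z) (\<lambda>x. x) = \<kappa> \<and>
        measure_pmf.variance (zero_or p z) (\<lambda>x. x) = - \<zeta> \<and>
        mixed_NE a b c \<theta> (pmf_borel (zero_or p z)) (pmf_borel (zero_or p z))"
      using NE p0 p1 unfolding Z by simp
  qed
  have P3: "a = 2 * b^2 / (c - \<theta>) \<longrightarrow> two_point_half (\<kappa> - s) (\<kappa> + s) = zero_or p z"
  proof
    assume "a = 2 * b^2 / (c - \<theta>)"
    then have aC2: "a * C = 2 * b^2" using C0 unfolding Cth by (simp add: field_simps)
    have "s^2 = \<kappa>^2" unfolding s2 \<kappa>_def aC2 using a2 by (simp add: field_simps power_divide)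
    then have sk: "s = \<kappa>" using s0 k0 by (simp add: power2_eq_iff_nonneg)
    have pp: "p = 1/2" unfolding p_def Cth aC2 using b2 by simp
    have zz: "z = \<kappa> + s" unfolding sk z_def \<kappa>_def Cth using aC2 assms(1,2)
      by (simp add: field_simps power2_eq_square)
    show "two_point_half (\<kappa> - s) (\<kappa> + s) = zero_or p z" unfolding T Z pp zz sk by simp
  qed
  show ?thesis using P1 P2 P3 by blast
qed

end
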